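(* Consider the uniform case $\pi^\ell=\mathbf 1/K$. Let $t\in[0,1]$ with $\alpha_t<1$, let $\mathbf x_t\in\mathsf X$, $\ell\in\{1,\dots,L\}$, and write $\mathbf x_t^\ell=e_k$. Set $\nu:=\hat{\mathbf x}^{\mathrm{loo}}_0(\mathbf x_t,t)^\ell$ and $\mu:=\sum_x p^\ell_{0|t}(x\mid\mathbf x_t)\,x$ (the denoiser vector). Then: (i) $$\mu=\frac{(1-\alpha_t)\nu+K\alpha_t\,\nu_k\, e_k}{1-\alpha_t+K\alpha_t\nu_k},$$ and $$\nu=\frac{(1+(K-1)\alpha_t)\mu-K\alpha_t\,\mu_k\,e_k}{1+(K-1)\alpha_t-K\alpha_t\mu_k},$$ where $\nu_k=\langle e_k,\nu\rangle$ and $\mu_k=\langle e_k,\mu\rangle$. (ii) In particular, if $\nu=\mathrm{softmax}(f)$ for some $f\in\mathbb R^K$, then $$\mu=\mathrm{softmax}\Big(f+\log\big(1+\tfrac{K\alpha_t}{1-\alpha_t}\big)\,e_k\Big).$$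
   Context: **Setup.** - Let $K\ge2$, $L\ge1$ and $\mathsf V=\{1,\dots,K\}$. Tokens are identified with the standard basis vectors $e_1,\dots,e_K$ of $\mathbb R^K$. - $\mathsf X=\mathsf V^L$. For $\mathbf x\in\mathsf X$, $\mathbf x^\ell$ is its $\ell$-th token and $\mathbf x^{-\ell}$ denotes the other tokens. - $p_0$ is a distribution on $\mathsf X$. - $\alpha:[0,1]\to[0,1]$ is nonincreasing with $\alpha_0=1$. - Uniform forward kernel: $q^\ell_{t|0}(x_t\mid x_0)=\langle x_t,\alpha_t x_0+(1-\alpha_t)\mathbf 1/K\rangle$, factorized over positions. - $X_0\sim p_0$ and $X_t\mid X_0\sim q_{t|0}(\cdot\mid X_0)$. **Posteriors.** - $p^\ell_{0|t}(x\mid\mathbf x_t)=\mathbb P(X_0^\ell=x\mid X_t=\mathbf x_t)$. - $\hat{\mathbf x}^{\mathrm{loo}}_0(\mathbf x_t,t)^\ell=\mathbb E[X_0^\ell\mid X_t^{-\ell}=\mathbf x_t^{-\ell}]$. - When $\alpha_t<1$, every state has positive probability under the law of $X_t$. *)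

theory Defs
  imports "HOL-Analysis.Analysis" "HOL-Probability.Probability_Mass_Function"
begin

text \<open>Tokens: the finite type 'k (K = CARD('k)), token e_x = axis x 1 in real^'k.
  Positions: the finite type 'l (L = CARD('l)). Sequences: 'l \<Rightarrow> 'k.\<close>

definition tok :: "'k::finite \<Rightarrow> real^'k" where
  "tok x = axis x 1"

definition qkern :: "real \<Rightarrow> 'k::finite \<Rightarrow> 'k \<Rightarrow> real" where
  "qkern a xt x0 = tok xt \<bullet> (a *\<^sub>R tok x0 + ((1 - a) / real CARD('k)) *\<^sub>R (\<chi> j. 1))"

definition qfwd :: "real \<Rightarrow> ('l::finite \<Rightarrow> 'k::finite) \<Rightarrow> ('l \<Rightarrow> 'k) \<Rightarrow> real" where
  "qfwd a xt x0 = (\<Prod>m\<in>UNIV. qkern a (xt m) (x0 m))"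

definition joint :: "('l::finite \<Rightarrow> 'k::finite) pmf \<Rightarrow> real \<Rightarrow> ('l \<Rightarrow> 'k) \<Rightarrow> ('l \<Rightarrow> 'k) \<Rightarrow> real" where
  "joint p0 a x0 xt = pmf p0 x0 * qfwd a xt x0"

definition post :: "('l::finite \<Rightarrow> 'k::finite) pmf \<Rightarrow> real \<Rightarrow> 'l \<Rightarrow> ('l \<Rightarrow> 'k) \<Rightarrow> 'k \<Rightarrow> real" where
  "post p0 a l xt x =
     (\<Sum>x0\<in>{x0. x0 l = x}. joint p0 a x0 xt) / (\<Sum>x0\<in>UNIV. joint p0 a x0 xt)"

definition denoiser :: "('l::finite \<Rightarrow> 'k::finite) pmf \<Rightarrow> real \<Rightarrow> 'l \<Rightarrow> ('l \<Rightarrow> 'k) \<Rightarrow> real^'k" where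
  "denoiser p0 a l xt = (\<Sum>x\<in>UNIV. post p0 a l xt x *\<^sub>R tok x)"

text \<open>Leave-one-out posterior mean E[X_0^l | X_t^{-l} = xt^{-l}].\<close>
definition loo :: "('l::finite \<Rightarrow> 'k::finite) pmf \<Rightarrow> real \<Rightarrow> 'l \<Rightarrow> ('l \<Rightarrow> 'k) \<Rightarrow> real^'k" where
  "loo p0 a l xt =
     (let S = {y. \<forall>m. m \<noteq> l \<longrightarrow> y m = xt m} in
      (1 / (\<Sum>x0\<in>UNIV. \<Sum>y\<in>S. joint p0 a x0 y)) *\<^sub>R
        (\<Sum>x0\<in>UNIV. \<Sum>y\<in>S. joint p0 a x0 y *\<^sub>R tok (x0 l)))"

definition softmax :: "real^'k::finite \<Rightarrow> real^'k" where
  "softmax f = (\<chi> i. exp (f $ i) / (\<Sum>j\<in>UNIV. exp (f $ j)))"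

end

theory Submission imports Defs begin

lemma tok_inner: "tok i \<bullet> (v::real^'k::finite) = v $ i"
  by (simp add: tok_def inner_axis')

lemma tok_nth: "tok i $ j = (if j = i then 1 else (0::real))"
  by (simp add: tok_def axis_def)

lemma qkern_eq: "qkern a (y::'k::finite) x = (if y = x then a else 0) + (1 - a) / real CARD('k)"
  by (simp add: qkern_def tok_inner tok_nth inner_add_right)

lemma qkern_sum: "(\<Sum>y\<in>UNIV. qkern a (y::'k::finite) x) = 1"
  by (simp add: qkern_eq sum.distrib)

lemma sumS: "(\<Sum>y\<in>{y. \<forall>m. m \<noteq> l \<longrightarrow> y m = xt m}. F y) = (\<Sum>v\<in>(UNIV::'k::finite set). F (xt(l:=v)))"
proof -
  have "{y. \<forall>m. m \<noteq> l \<longrightarrow> y m = xt m} = (\<lambda>v. xt(l:=v)) ` UNIV"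
    by (auto simp: image_def fun_eq_iff)
  moreover have "inj (\<lambda>v. xt(l:=v))" by (auto simp: inj_def fun_eq_iff)
  ultimately show ?thesis by (simp add: sum.reindex)
qed

lemma qfwd_split: "qfwd a (y::'l::finite \<Rightarrow> 'k::finite) x0 = qkern a (y l) (x0 l) * (\<Prod>m\<in>UNIV-{l}. qkern a (y m) (x0 m))"
  unfolding qfwd_def by (simp add: prod.remove)

lemma qfwd_upd: "qfwd a ((xt::'l::finite \<Rightarrow> 'k::finite)(l:=v)) x0 = qkern a v (x0 l) * (\<Prod>m\<in>UNIV-{l}. qkern a (xt m) (x0 m))"
  unfolding qfwd_split[where l=l] by (auto intro!: prod.cong)

lemma sum_group_l: "(\<Sum>x0\<in>UNIV. F x0) = (\<Sum>i\<in>UNIV. \<Sum>x0\<in>{x0::'l::finite\<Rightarrow>'k::finite. x0 l = i}. F x0)"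
  using sum.group[of UNIV UNIV "\<lambda>x0. x0 l" F] by simp

lemma core:
  fixes pp :: "('l::finite \<Rightarrow> 'k::finite) pmf" and xt :: "'l \<Rightarrow> 'k"
  assumes a0: "0 \<le> a" and a1: "a < 1" and xk: "xt l = k"
  defines "w \<equiv> \<lambda>x0. pmf pp x0 * (\<Prod>m\<in>UNIV-{l}. qkern a (xt m) (x0 m))"
  defines "W \<equiv> \<lambda>i. \<Sum>x0\<in>{x0. x0 l = i}. w x0"
  defines "Wt \<equiv> \<Sum>x0\<in>UNIV. w x0"
  shows "Wt > 0" "\<And>i. W i \<ge> 0" "Wt = (\<Sum>i\<in>UNIV. W i)"
    "\<And>i. loo pp a l xt $ i = W i / Wt"
    "\<And>i. denoiser pp a l xt $ i = W i * qkern a k i / (\<Sum>j\<in>UNIV. W j * qkern a k j)"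
proof -
  have Kpos: "real CARD('k) > 0" by simp
  have qpos: "qkern a y x > 0" for y x :: 'k
    using a0 a1 Kpos by (auto simp: qkern_eq intro: add_nonneg_pos divide_pos_pos)
  have wnn: "w x0 \<ge> 0" for x0
    unfolding w_def by (intro mult_nonneg_nonneg pmf_nonneg prod_nonneg) (simp add: less_imp_le qpos)
  then show "\<And>i. W i \<ge> 0" unfolding W_def by (simp add: sum_nonneg)
  obtain x1 where x1: "x1 \<in> set_pmf pp" using set_pmf_not_empty by fastforce
  have "w x1 > 0" unfolding w_def using x1 qpos
    by (auto intro!: mult_pos_pos prod_pos simp: set_pmf_iff)
  moreover have "w x1 \<le> Wt" unfolding Wt_def
    by (rule member_le_sum) (use wnn in auto)
  ultimately show "Wt > 0" by simp
  show WtW: "Wt = (\<Sum>i\<in>UNIV. W i)" unfolding Wt_def W_def by (rule sum_group_l)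
  have inner: "(\<Sum>y\<in>{y. \<forall>m. m \<noteq> l \<longrightarrow> y m = xt m}. joint pp a x0 y) = w x0" for x0
    unfolding sumS joint_def qfwd_upd w_def
    by (simp add: sum_distrib_left[symmetric] sum_distrib_right[symmetric] qkern_sum mult.assoc
         flip: mult.assoc)
  show "loo pp a l xt $ i = W i / Wt" for i
  proof -
    have "(\<Sum>x0\<in>UNIV. w x0 *\<^sub>R tok (x0 l)) $ i = (\<Sum>x0\<in>UNIV. if x0 l = i then w x0 else 0)"
      by (auto simp: tok_nth intro!: sum.cong)
    also have "\<dots> = W i" unfolding W_def by (simp add: sum.If_cases Collect_conj_eq[symmetric]) 
    moreover have "loo pp a l xt = (1 / Wt) *\<^sub>R (\<Sum>x0\<in>UNIV. w x0 *\<^sub>R tok (x0 l))"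
      unfolding loo_def Let_def scaleR_sum_left[symmetric] inner Wt_def ..
    ultimately show ?thesis by simp
  qed
  have jxt: "joint pp a x0 xt = w x0 * qkern a k (x0 l)" for x0
    unfolding joint_def w_def qfwd_split[where l=l] xk by simp
  show "denoiser pp a l xt $ i = W i * qkern a k i / (\<Sum>j\<in>UNIV. W j * qkern a k j)" for i
  proof -
    have "denoiser pp a l xt $ i = post pp a l xt i"
    proof -
      have "(\<Sum>x\<in>UNIV. post pp a l xt x * (if i = x then 1 else 0)) = (\<Sum>x\<in>UNIV. if i = x then post pp a l xt x else 0)"
        by (rule sum.cong) auto
      then show ?thesis unfolding denoiser_def by (simp add: tok_nth)
    qed
    also have "(\<Sum>x0\<in>{x0. x0 l = i}. joint pp a x0 xt) = W i * qkern a k i"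
      unfolding jxt W_def by (simp add: sum_distrib_right)
    moreover have "(\<Sum>x0\<in>UNIV. joint pp a x0 xt) = (\<Sum>j\<in>UNIV. W j * qkern a k j)"
      unfolding sum_group_l[where l=l] W_def
      by (simp add: jxt sum_distrib_right)
    ultimately show ?thesis unfolding post_def by simp
  qed
qed

lemma alg1:
  fixes Wi Wk Wt K a :: real
  assumes Wt: "Wt > 0" and K: "K > 0" and E: "1 - a + K * a * (Wk / Wt) > 0"
    and b: "b \<Longrightarrow> Wi = Wk"
  shows "Wi * ((if b then a else 0) + (1 - a) / K) / (a * Wk + (1 - a) / K * Wt)
     = 1 / (1 - a + K * a * (Wk / Wt)) * ((1 - a) * (Wi / Wt) + K * a * (Wk / Wt) * (if b then 1 else 0))"
proof -
  define E where "E = 1 - a + K * a * (Wk / Wt)"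
  have D: "a * Wk + (1 - a) / K * Wt = Wt * E / K"
    unfolding E_def using Wt K by (simp add: field_simps)
  have E0: "E \<noteq> 0" using E unfolding E_def by simp
  show ?thesis
    unfolding E_def[symmetric] D
    using Wt K E0 b by (cases b) (simp_all add: field_simps)
qed

lemma alg2:
  fixes Wi Wk Wt K a :: real
  assumes Wt: "Wt > 0" and K: "K > 0" and E: "1 - a + K * a * (Wk / Wt) > 0"
    and a1: "a < 1" and a0: "0 \<le> a"
    and b: "b \<Longrightarrow> Wi = Wk"
  shows "Wi / Wt = 1 / (1 + (K - 1) * a - K * a * (Wk * (a + (1 - a) / K) / (a * Wk + (1 - a) / K * Wt))) *
     ((1 + (K - 1) * a) * (Wi * ((if b then a else 0) + (1 - a) / K) / (a * Wk + (1 - a) / K * Wt))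
      - K * a * (Wk * (a + (1 - a) / K) / (a * Wk + (1 - a) / K * Wt)) * (if b then 1 else 0))"
proof -
  define E where "E = 1 - a + K * a * (Wk / Wt)"
  have D: "a * Wk + (1 - a) / K * Wt = Wt * E / K"
    unfolding E_def using Wt K by (simp add: field_simps)
  have E0: "E > 0" using E unfolding E_def by simp
  define c where "c = 1 + (K - 1) * a"
  have c0: "c > 0"
  proof -
    have "K * a \<ge> 0" using K a0 by simp
    then show ?thesis unfolding c_def using a1 by (simp add: algebra_simps)
  qed
  have ca: "a + (1 - a) / K = c / K" unfolding c_def using K by (simp add: field_simps)
  have muk: "Wk * (a + (1 - a) / K) / (a * Wk + (1 - a) / K * Wt) = Wk * c / (Wt * E)"
    unfolding ca D using K by (simp add: field_simps)
  have den: "1 + (K - 1) * a - K * a * (Wk * c / (Wt * E)) = c * (1 - a) / E"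
  proof -
    define y where "y = K * a * (Wk / Wt)"
    have Ey: "E - y = 1 - a" unfolding E_def y_def by simp
    have "K * a * (Wk * c / (Wt * E)) = c * y / E" unfolding y_def by simp
    moreover have "c - c * y / E = c * (E - y) / E" using E0 by (simp add: field_simps)
    ultimately show ?thesis unfolding c_def[symmetric] Ey by simp
  qed
  have den': "c - K * a * (Wk * c / (Wt * E)) = c * (1 - a) / E" using den unfolding c_def by simp
  have den0: "c * (1 - a) / E \<noteq> 0" using c0 a1 E0 by simp
  have cK: "c - K * a = 1 - a" unfolding c_def by (simp add: algebra_simps)
  show ?thesis
  proof (cases b)
    case True
    then have Wi: "Wi = Wk" by (rule b)
    define X where "X = Wk * c / (Wt * E)"
    have "1 / (c * (1 - a) / E) * (c * X - K * a * X * 1) = 1 / (c * (1 - a) / E) * (X * (c - K * a))"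
      by (simp add: algebra_simps)
    also have "\<dots> = E * X / c" unfolding cK using a1 c0 E0 by (simp add: field_simps)
    also have "\<dots> = Wk / Wt" unfolding X_def using c0 E0 Wt by (simp add: field_simps)
    finally have "Wk / Wt = 1 / (c * (1 - a) / E) * (c * X - K * a * X * 1)" by simp
    moreover have mui: "Wi * ((if b then a else 0) + (1 - a) / K) / (a * Wk + (1 - a) / K * Wt) = X"
      using True Wi muk unfolding X_def by simp
    ultimately show ?thesis using True unfolding mui muk unfolding c_def[symmetric] unfolding den' unfolding X_def[symmetric] Wi
      by simp
  next
    case False
    have mui: "Wi * ((if b then a else 0) + (1 - a) / K) / (a * Wk + (1 - a) / K * Wt) = Wi * (1 - a) / (Wt * E)"
      unfolding D using False K E0 Wt by (simp add: field_simps)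
    have "1 / (c * (1 - a) / E) * (c * (Wi * (1 - a) / (Wt * E))) = Wi / Wt"
      using a1 c0 E0 Wt by (simp add: field_simps)
    then show ?thesis using False unfolding mui muk unfolding c_def[symmetric] unfolding den' by simp
  qed
qed

theorem mainTheorem4:
  fixes \<alpha> :: "real \<Rightarrow> real" and t :: real
    and p0 :: "('l::finite \<Rightarrow> 'k::finite) pmf"
    and xt :: "'l \<Rightarrow> 'k" and l :: 'l and k :: 'k
  assumes K2: "CARD('k) \<ge> 2"
    and \<alpha>_range: "\<forall>s\<in>{0..1}. \<alpha> s \<in> {0..1}"
    and \<alpha>_mono: "\<forall>s\<in>{0..1}. \<forall>u\<in>{0..1}. s \<le> u \<longrightarrow> \<alpha> u \<le> \<alpha> s"
    and \<alpha>0: "\<alpha> 0 = 1"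
    and t: "t \<in> {0..1}" and \<alpha>t: "\<alpha> t < 1"
    and xk: "tok (xt l) = tok k"
  shows "(let K = real CARD('k); a = \<alpha> t;
             \<nu> = loo p0 a l xt; \<mu> = denoiser p0 a l xt;
             \<nu>k = tok k \<bullet> \<nu>; \<mu>k = tok k \<bullet> \<mu>
         in \<mu> = (1 / (1 - a + K * a * \<nu>k)) *\<^sub>R ((1 - a) *\<^sub>R \<nu> + (K * a * \<nu>k) *\<^sub>R tok k)
          \<and> \<nu> = (1 / (1 + (K - 1) * a - K * a * \<mu>k)) *\<^sub>R
                  ((1 + (K - 1) * a) *\<^sub>R \<mu> - (K * a * \<mu>k) *\<^sub>R tok k)
          \<and> (\<forall>f. \<nu> = softmax f \<longrightarrow>
                 \<mu> = softmax (f + ln (1 + K * a / (1 - a)) *\<^sub>R tok k)))"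
proof -
  define a where "a = \<alpha> t"
  define K where "K = real CARD('k)"
  have a0: "0 \<le> a" using \<alpha>_range t unfolding a_def by auto
  have a1: "a < 1" using \<alpha>t unfolding a_def .
  have K2': "K \<ge> 2" using K2 unfolding K_def by simp
  have xk': "xt l = k" using xk by (simp add: tok_def axis_eq_axis)
  define w where "w \<equiv> \<lambda>x0. pmf p0 x0 * (\<Prod>m\<in>UNIV-{l}. qkern a (xt m) (x0 m))"
  define W where "W \<equiv> \<lambda>i. \<Sum>x0\<in>{x0. x0 l = i}. w x0"
  define Wt where "Wt \<equiv> \<Sum>x0\<in>UNIV. w x0"
  note C0 = core[where a=a and xt=xt and l=l and k=k and pp=p0]
  note C1 = C0[OF a0 a1 xk']
  note C = C1[folded w_def]
  have Wt0: "Wt > 0" and W0: "\<And>i. W i \<ge> 0" and WtW: "Wt = (\<Sum>i\<in>UNIV. W i)"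
    and nu: "\<And>i. loo p0 a l xt $ i = W i / Wt"
    and mu0: "\<And>i. denoiser p0 a l xt $ i = W i * qkern a k i / (\<Sum>j\<in>UNIV. W j * qkern a k j)"
    using C unfolding W_def Wt_def by auto
  have D: "(\<Sum>j\<in>UNIV. W j * qkern a k j) = a * W k + (1 - a) / K * Wt"
  proof -
    have "(\<Sum>j\<in>UNIV. W j * ((1 - a) / K)) = (1 - a) / K * Wt"
      unfolding WtW sum_distrib_right[symmetric] by (simp add: mult.commute)
    then show ?thesis
      by (simp add: qkern_eq K_def distrib_left sum.distrib
        if_distrib[of "\<lambda>z. _ * z"] cong: if_cong)
  qed
  have mu: "\<And>i. denoiser p0 a l xt $ i = W i * ((if i = k then a else 0) + (1 - a) / K) / (a * W k + (1 - a) / K * Wt)"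
    unfolding mu0 D by (auto simp: qkern_eq K_def)
  have Kp: "K > 0" using K2' by simp
  have Wk: "W k \<ge> 0" by (rule W0)
  have D0: "a * W k + (1 - a) / K * Wt > 0"
    using a0 a1 Kp Wt0 Wk by (intro add_nonneg_pos mult_nonneg_nonneg mult_pos_pos divide_pos_pos) auto
  have E0: "1 - a + K * a * (W k / Wt) > 0"
    using a0 a1 Kp Wt0 Wk by (intro add_pos_nonneg mult_nonneg_nonneg divide_nonneg_pos) auto
  show ?thesis
    unfolding a_def[symmetric] K_def[symmetric] Let_def
  proof (intro conjI allI impI)
    show "denoiser p0 a l xt = (1 / (1 - a + K * a * (tok k \<bullet> loo p0 a l xt))) *\<^sub>R
      ((1 - a) *\<^sub>R loo p0 a l xt + (K * a * (tok k \<bullet> loo p0 a l xt)) *\<^sub>R tok k)"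
      unfolding vec_eq_iff
    proof
      fix i
      show "denoiser p0 a l xt $ i = ((1 / (1 - a + K * a * (tok k \<bullet> loo p0 a l xt))) *\<^sub>R
      ((1 - a) *\<^sub>R loo p0 a l xt + (K * a * (tok k \<bullet> loo p0 a l xt)) *\<^sub>R tok k)) $ i"
        using alg1[OF Wt0 Kp E0, of "i = k" "W i"]
        by (simp add: tok_nth tok_inner nu mu)
    qed
    show "loo p0 a l xt = (1 / (1 + (K - 1) * a - K * a * (tok k \<bullet> denoiser p0 a l xt))) *\<^sub>R
      ((1 + (K - 1) * a) *\<^sub>R denoiser p0 a l xt - (K * a * (tok k \<bullet> denoiser p0 a l xt)) *\<^sub>R tok k)"
      unfolding vec_eq_iff
    proof
      fix i
      show "loo p0 a l xt $ i = ((1 / (1 + (K - 1) * a - K * a * (tok k \<bullet> denoiser p0 a l xt))) *\<^sub>R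
      ((1 + (K - 1) * a) *\<^sub>R denoiser p0 a l xt - (K * a * (tok k \<bullet> denoiser p0 a l xt)) *\<^sub>R tok k)) $ i"
        using alg2[OF Wt0 Kp E0 a1 a0, of "i = k" "W i"]
        by (simp add: tok_nth tok_inner nu mu)
    qed
    fix f assume sf: "loo p0 a l xt = softmax f"
    define c where "c = 1 + K * a / (1 - a)"
    have c0: "c > 0" unfolding c_def using Kp a0 a1 by (simp add: add_pos_nonneg)
    define h where "h = (\<lambda>i. if i = k then c else (1::real))"
    define e where "e = (\<lambda>i. exp (f $ i))"
    define Z where "Z = (\<Sum>j\<in>UNIV. e j)"
    have Z0: "Z > 0" unfolding Z_def e_def by (simp add: sum_pos)
    have hW: "W i = (Wt / Z) * e i" for i
    proof -
      have "W i / Wt = e i / Z" using nu[of i] sf unfolding softmax_def e_def Z_def by simp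
      then show ?thesis using Wt0 Z0 by (simp add: field_simps)
    qed
    have g: "qkern a k i = (1 - a) / K * h i" for i
      unfolding qkern_eq h_def c_def K_def[symmetric] using a1 Kp
      by (auto simp: field_simps)
    define s where "s = Wt / Z * ((1 - a) / K)"
    have s0: "s > 0" unfolding s_def using Wt0 Z0 a1 Kp by simp
    have "denoiser p0 a l xt $ i = (s * (e i * h i)) / (s * (\<Sum>j\<in>UNIV. e j * h j))" for i
      unfolding mu0 g hW s_def sum_distrib_left by (simp add: ac_simps)
    also have "\<dots> i = e i * h i / (\<Sum>j\<in>UNIV. e j * h j)" for i using s0 by simp
    also have "\<dots> i = softmax (f + ln c *\<^sub>R tok k) $ i" for i
    proof -
      have "exp ((f + ln c *\<^sub>R tok k) $ j) = e j * h j" for j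
        unfolding e_def h_def using c0 by (simp add: tok_nth exp_add)
      then show ?thesis unfolding softmax_def by simp
    qed
    finally show "denoiser p0 a l xt = softmax (f + ln (1 + K * a / (1 - a)) *\<^sub>R tok k)"
      unfolding c_def[symmetric] by (simp add: vec_eq_iff)
  qed
qed

end
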